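(* Assume (SM), (LIP), (POT) and consider the algorithm AILFEM of the context with arbitrary $\lambda_{\mathrm{lin}},\lambda_{\mathrm{alg}}>0$. Define $\tau:=M+3M(L[3M]/\alpha)^{1/2}\ (\ge4M)$. Let $k\in\mathbb{N}_0$ with $0\le k<\underline{k}[\ell]$ and $|||u_\ell^{k,\underline{i}}|||\le\tau$, and let $i_{\min}\in\mathbb{N}$ satisfy $q_{\mathrm{alg}}^{i_{\min}}\le1/3$. Then, for $0<\delta<\min\{1/L[5\tau],\,2\alpha/L[2\tau]^2\}$, it holds that $$0\le\mathcal{E}(u_\ell^{k+1,\underline{i}})-\mathcal{E}(u_\ell^\star)\le q_{\mathcal{E}}[\delta,\tau]^2\,[\mathcal{E}(u_\ell^{k,\underline{i}})-\mathcal{E}(u_\ell^\star)]$$ with the contraction constant $$0\le q_{\mathcal{E}}[\delta,\tau]^2:=1-\Big(\frac1\delta-L[5\tau]\Big)\frac{(1-q_{\mathrm{alg}}^{i_{\min}})^2\delta^2\alpha^2}{L[2\tau]}<1,$$ and $q_{\mathcal{E}}[\delta,\tau]\to1$ as $\delta\to0$. In particular, $$(1-q_{\mathcal{E}}[\delta,\tau]^2)[\mathcal{E}(u_\ell^{k,\underline{i}})-\mathcal{E}(u_\ell^\star)]\le\mathcal{E}(u_\ell^{k,\underline{i}})-\mathcal{E}(u_\ell^{k+1,\underline{i}})\le\mathcal{E}(u_\ell^{k,\underline{i}})-\mathcal{E}(u_\ell^\star).$$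
   Context: Abstract setting. Let $\mathcal{X}$ be a real Hilbert space with scalar product $\langle\!\langle\cdot,\cdot\rangle\!\rangle$ and norm $|||\cdot|||$, with dual space $\mathcal{X}'$ (norm $\|\cdot\|_{\mathcal{X}'}$, duality bracket $\langle\cdot,\cdot\rangle$). Let $\mathcal{A}:\mathcal{X}\to\mathcal{X}'$ be a nonlinear operator and $F\in\mathcal{X}'$ with $\mathcal{A}0\neq F$. Conditions: (SM) there is $\alpha>0$ with $\alpha|||v-w|||^2\le\langle\mathcal{A}v-\mathcal{A}w,v-w\rangle$ for all $v,w\in\mathcal{X}$; (LIP) for every $\vartheta>0$ there is $L[\vartheta]>0$ with $\langle\mathcal{A}v-\mathcal{A}w,\varphi\rangle\le L[\vartheta]\,|||v-w|||\,|||\varphi|||$ for all $v,w,\varphi\in\mathcal{X}$ with $\max\{|||v|||,|||v-w|||\}\le\vartheta$; (POT) there is a Gâteaux differentiable $\mathcal{P}:\mathcal{X}\to\mathbb{R}$ with $\langle\mathcal{A}w,v\rangle=\lim_{t\to0}(\mathcal{P}(w+tv)-\mathcal{P}(w))/t$ for all $v,w$. The energy is $\mathcal{E}(v):=\mathcal{P}(v)-F(v)$. For every closed subspace $\mathcal{Y}\subseteq\mathcal{X}$ there is a unique $u^\star_{\mathcal{Y}}\in\mathcal{Y}$ with $\langle\mathcal{A}u^\star_{\mathcal{Y}},v\rangle=F(v)$ for all $v\in\mathcal{Y}$; $u^\star:=u^\star_{\mathcal{X}}$. Put $M:=\|F-\mathcal{A}0\|_{\mathcal{X}'}/\alpha$.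 Meshes. $\mathcal{T}_0$ is an initial conforming simplicial triangulation; $\mathtt{refine}(\mathcal{T}_H,\mathcal{M}_H)$ is the coarsest newest-vertex-bisection (NVB) refinement of $\mathcal{T}_H$ in which all elements of $\mathcal{M}_H\subseteq\mathcal{T}_H$ are refined; $\mathbb{T}(\mathcal{T}_H)$ is the set of meshes obtained from $\mathcal{T}_H$ by finitely many NVB steps, $\mathbb{T}:=\mathbb{T}(\mathcal{T}_0)$. Each $\mathcal{T}_H\in\mathbb{T}$ is associated with a finite-dimensional subspace $\mathcal{X}_H\subset\mathcal{X}$, nested: $\mathcal{X}_H\subseteq\mathcal{X}_h$ if $\mathcal{T}_h\in\mathbb{T}(\mathcal{T}_H)$. Write $u_H^\star:=u^\star_{\mathcal{X}_H}$. Zarantonello map: for $\delta>0$, $w_H\in\mathcal{X}_H$, $\Phi_H(\delta;w_H)\in\mathcal{X}_H$ is the unique solution of $\langle\!\langle\Phi_H(\delta;w_H),v_H\rangle\!\rangle=\langle\!\langle w_H,v_H\rangle\!\rangle+\delta[F(v_H)-\langle\mathcal{A}w_H,v_H\rangle]$ for all $v_H\in\mathcal{X}_H$. Algebraic solver: there is $0<q_{\mathrm{alg}}<1$ and for each $\mathcal{T}_H$ a map $\Psi_H:\mathcal{X}'\times\mathcal{X}_H\to\mathcal{X}_H$ such that for every $\varphi\in\mathcal{X}'$, with $w_H^\star\in\mathcal{X}_H$ solving $\langle\!\langle w_H^\star,v_H\rangle\!\rangle=\varphi(v_H)$ for all $v_H\in\mathcal{X}_H$, one has $|||w_H^\star-\Psi_H(\varphi;w_H)|||\le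 q_{\mathrm{alg}}|||w_H^\star-w_H|||$ for all $w_H\in\mathcal{X}_H$. One writes $\Psi_H(w_H^\star;\cdot)$ for $\Psi_H(\varphi;\cdot)$. Estimator: for $\mathcal{T}_H\in\mathbb{T}$, $T\in\mathcal{T}_H$, $v_H\in\mathcal{X}_H$ a number $\eta_H(T,v_H)\ge0$ is given; $\eta_H(\mathcal{U},v_H):=(\sum_{T\in\mathcal{U}}\eta_H(T,v_H)^2)^{1/2}$ for $\mathcal{U}\subseteq\mathcal{T}_H$ and $\eta_H(v_H):=\eta_H(\mathcal{T}_H,v_H)$. Index $\ell$ refers to $\mathcal{T}_\ell$, $\mathcal{X}_\ell$, $\Phi_\ell$, $\Psi_\ell$, $\eta_\ell$, $u_\ell^\star$. Algorithm AILFEM. Input: $\mathcal{T}_0$, $0<\theta\le1$, $C_{\mathrm{mark}}\ge1$, $\lambda_{\mathrm{lin}},\lambda_{\mathrm{alg}}>0$, $i_{\min}\in\mathbb{N}$, $\delta>0$, $u_0^{0,0}\in\mathcal{X}_0$ with $|||u_0^{0,0}|||\le2M$; set $u_0^{0,\star}:=u_0^{0,\underline{i}}:=u_0^{0,0}$. For $\ell=0,1,2,\dots$: (I) For $k=1,2,\dots$: set $u_\ell^{k,0}:=u_\ell^{k-1,\underline{i}}$ and $u_\ell^{k,\star}:=\Phi_\ell(\delta;u_\ell^{k-1,\underline{i}})$ (not computed). For $i=1,2,\dots$: compute $u_\ell^{k,i}:=\Psi_\ell(u_\ell^{k,\star};u_\ell^{k,i-1})$ and $\eta_\ell(u_\ell^{k,i})$;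 terminate the $i$-loop with $\underline{i}[\ell,k]:=i$ if $|||u_\ell^{k,i-1}-u_\ell^{k,i}|||\le\lambda_{\mathrm{alg}}[\lambda_{\mathrm{lin}}\eta_\ell(u_\ell^{k,i})+|||u_\ell^{k,i}-u_\ell^{k,0}|||]$ and $i_{\min}\le i$. Write $u_\ell^{k,\underline{i}}:=u_\ell^{k,\underline{i}[\ell,k]}$. Terminate the $k$-loop with $\underline{k}[\ell]:=k$ if $\mathcal{E}(u_\ell^{k,0})-\mathcal{E}(u_\ell^{k,\underline{i}})\le\lambda_{\mathrm{lin}}^2\eta_\ell(u_\ell^{k,\underline{i}})^2$ and $|||u_\ell^{k,\underline{i}}|||\le2M$. (II) Choose $\mathcal{M}_\ell\subseteq\mathcal{T}_\ell$ with $\theta\,\eta_\ell(u_\ell^{\underline{k},\underline{i}})^2\le\eta_\ell(\mathcal{M}_\ell,u_\ell^{\underline{k},\underline{i}})^2$ and $\#\mathcal{M}_\ell\le C_{\mathrm{mark}}\min\{\#\mathcal{U}:\mathcal{U}\subseteq\mathcal{T}_\ell,\ \theta\eta_\ell(u_\ell^{\underline{k},\underline{i}})^2\le\eta_\ell(\mathcal{U},u_\ell^{\underline{k},\underline{i}})^2\}$. (III) $\mathcal{T}_{\ell+1}:=\mathtt{refine}(\mathcal{T}_\ell,\mathcal{M}_\ell)$ and $u_{\ell+1}^{0,0}:=u_{\ell+1}^{0,\underline{i}}:=u_{\ell+1}^{0,\star}:=u_\ell^{\underline{k},\underline{i}}$. Index set: $\mathcal{Q}:=\{(\ell,k,i)\in\mathbb{N}_0^3: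 u_\ell^{k,i}\text{ is used in the algorithm}\}$; $\underline{k}[\ell]:=\sup\{k\in\mathbb{N}:(\ell,k,0)\in\mathcal{Q}\}$, $\underline{i}[\ell,k]:=\sup\{i\in\mathbb{N}:(\ell,k,i)\in\mathcal{Q}\}$. *)

theory Defs
  imports "HOL-Analysis.Analysis" "HOL-Library.Extended_Nat"
begin

text \<open>The Hilbert space X is a type 'a of class real_inner and
complete_space; scalar product = inner, energy norm = norm.  Functionals in X' are
bounded linear maps 'a \<Rightarrow> real; the operator A maps w to the functional A w.\<close>

text \<open>Right-hand side functional of the Zarantonello map:
 v \<mapsto> <<w,v>> + delta (F v - <A w, v>).  Its Riesz representative in X_l is Phi_l(delta; w).\<close>
definition zar_rhs :: "('a::real_inner \<Rightarrow> 'a \<Rightarrow> real) \<Rightarrow> ('a \<Rightarrow> real) \<Rightarrow> real \<Rightarrow> 'a \<Rightarrow> ('a \<Rightarrow> real)" where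
  "zar_rhs A F \<delta> w = (\<lambda>v. inner w v + \<delta> * (F v - A w v))"

text \<open>Inner (algebraic) iterates u^{k,i} = Psi(u^{k,*}; u^{k,i-1}), u^{k,0} = w.\<close>
definition alg_iter :: "(('a::real_inner \<Rightarrow> real) \<Rightarrow> 'a \<Rightarrow> 'a) \<Rightarrow> ('a \<Rightarrow> 'a \<Rightarrow> real) \<Rightarrow> ('a \<Rightarrow> real)
    \<Rightarrow> real \<Rightarrow> 'a \<Rightarrow> nat \<Rightarrow> 'a" where
  "alg_iter \<Psi> A F \<delta> w i = (\<Psi> (zar_rhs A F \<delta> w) ^^ i) w"

definition alg_stop :: "(('a::real_inner \<Rightarrow> real) \<Rightarrow> 'a \<Rightarrow> 'a) \<Rightarrow> ('a \<Rightarrow> 'a \<Rightarrow> real) \<Rightarrow> ('a \<Rightarrow> real)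
    \<Rightarrow> real \<Rightarrow> ('a \<Rightarrow> real) \<Rightarrow> real \<Rightarrow> real \<Rightarrow> nat \<Rightarrow> 'a \<Rightarrow> nat \<Rightarrow> bool" where
  "alg_stop \<Psi> A F \<delta> \<eta> lam_lin lam_alg imin w i \<longleftrightarrow>
     1 \<le> i \<and> imin \<le> i \<and>
     norm (alg_iter \<Psi> A F \<delta> w (i - 1) - alg_iter \<Psi> A F \<delta> w i)
       \<le> lam_alg * (lam_lin * \<eta> (alg_iter \<Psi> A F \<delta> w i) + norm (alg_iter \<Psi> A F \<delta> w i - w))"

definition alg_index :: "(('a::real_inner \<Rightarrow> real) \<Rightarrow> 'a \<Rightarrow> 'a) \<Rightarrow> ('a \<Rightarrow> 'a \<Rightarrow> real) \<Rightarrow> ('a \<Rightarrow> real)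
    \<Rightarrow> real \<Rightarrow> ('a \<Rightarrow> real) \<Rightarrow> real \<Rightarrow> real \<Rightarrow> nat \<Rightarrow> 'a \<Rightarrow> nat" where
  "alg_index \<Psi> A F \<delta> \<eta> lam_lin lam_alg imin w = (LEAST i. alg_stop \<Psi> A F \<delta> \<eta> lam_lin lam_alg imin w i)"

definition ail_step :: "(('a::real_inner \<Rightarrow> real) \<Rightarrow> 'a \<Rightarrow> 'a) \<Rightarrow> ('a \<Rightarrow> 'a \<Rightarrow> real) \<Rightarrow> ('a \<Rightarrow> real)
    \<Rightarrow> real \<Rightarrow> ('a \<Rightarrow> real) \<Rightarrow> real \<Rightarrow> real \<Rightarrow> nat \<Rightarrow> 'a \<Rightarrow> 'a" where
  "ail_step \<Psi> A F \<delta> \<eta> lam_lin lam_alg imin w =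
     alg_iter \<Psi> A F \<delta> w (alg_index \<Psi> A F \<delta> \<eta> lam_lin lam_alg imin w)"

definition ail_iterate :: "(('a::real_inner \<Rightarrow> real) \<Rightarrow> 'a \<Rightarrow> 'a) \<Rightarrow> ('a \<Rightarrow> 'a \<Rightarrow> real) \<Rightarrow> ('a \<Rightarrow> real)
    \<Rightarrow> real \<Rightarrow> ('a \<Rightarrow> real) \<Rightarrow> real \<Rightarrow> real \<Rightarrow> nat \<Rightarrow> 'a \<Rightarrow> nat \<Rightarrow> 'a" where
  "ail_iterate \<Psi> A F \<delta> \<eta> lam_lin lam_alg imin u0 k =
     (ail_step \<Psi> A F \<delta> \<eta> lam_lin lam_alg imin ^^ k) u0"

definition energy :: "('a \<Rightarrow> real) \<Rightarrow> ('a \<Rightarrow> real) \<Rightarrow> 'a \<Rightarrow> real" where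
  "energy P F v = P v - F v"

definition lin_stop :: "(('a::real_inner \<Rightarrow> real) \<Rightarrow> 'a \<Rightarrow> 'a) \<Rightarrow> ('a \<Rightarrow> 'a \<Rightarrow> real) \<Rightarrow> ('a \<Rightarrow> real)
    \<Rightarrow> ('a \<Rightarrow> real) \<Rightarrow> real \<Rightarrow> ('a \<Rightarrow> real) \<Rightarrow> real \<Rightarrow> real \<Rightarrow> nat \<Rightarrow> real \<Rightarrow> 'a \<Rightarrow> nat \<Rightarrow> bool" where
  "lin_stop \<Psi> A F P \<delta> \<eta> lam_lin lam_alg imin M u0 k \<longleftrightarrow>
     1 \<le> k \<and>
     energy P F (ail_iterate \<Psi> A F \<delta> \<eta> lam_lin lam_alg imin u0 (k - 1))
       - energy P F (ail_iterate \<Psi> A F \<delta> \<eta> lam_lin lam_alg imin u0 k)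
       \<le> lam_lin\<^sup>2 * (\<eta> (ail_iterate \<Psi> A F \<delta> \<eta> lam_lin lam_alg imin u0 k))\<^sup>2 \<and>
     norm (ail_iterate \<Psi> A F \<delta> \<eta> lam_lin lam_alg imin u0 k) \<le> 2 * M"

definition lin_index :: "(('a::real_inner \<Rightarrow> real) \<Rightarrow> 'a \<Rightarrow> 'a) \<Rightarrow> ('a \<Rightarrow> 'a \<Rightarrow> real) \<Rightarrow> ('a \<Rightarrow> real)
    \<Rightarrow> ('a \<Rightarrow> real) \<Rightarrow> real \<Rightarrow> ('a \<Rightarrow> real) \<Rightarrow> real \<Rightarrow> real \<Rightarrow> nat \<Rightarrow> real \<Rightarrow> 'a \<Rightarrow> enat" where
  "lin_index \<Psi> A F P \<delta> \<eta> lam_lin lam_alg imin M u0 =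
     (if \<exists>k. lin_stop \<Psi> A F P \<delta> \<eta> lam_lin lam_alg imin M u0 k
      then enat (LEAST k. lin_stop \<Psi> A F P \<delta> \<eta> lam_lin lam_alg imin M u0 k)
      else \<infinity>)"

definition qE2 :: "(real \<Rightarrow> real) \<Rightarrow> real \<Rightarrow> real \<Rightarrow> nat \<Rightarrow> real \<Rightarrow> real \<Rightarrow> real" where
  "qE2 L \<alpha> qalg imin \<tau> \<delta> =
     1 - (1 / \<delta> - L (5 * \<tau>)) * ((1 - qalg ^ imin)\<^sup>2 * \<delta>\<^sup>2 * \<alpha>\<^sup>2) / L (2 * \<tau>)"

end

theory Submission
  imports Defs
begin


lemma riesz_fin:
  fixes \<phi> :: "'a::real_inner \<Rightarrow> real"
  assumes "finite B" "V = span B" "linear \<phi>"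
  shows "\<exists>z\<in>V. \<forall>v\<in>V. inner z v = \<phi> v"
proof -
  obtain C where C: "finite C" "span C = span B" "pairwise orthogonal C"
    using basis_orthogonal[OF assms(1)] by blast
  define z where "z = (\<Sum>c\<in>C. (\<phi> c / inner c c) *\<^sub>R c)"
  have zV: "z \<in> V" unfolding z_def assms(2) C(2)[symmetric]
    by (intro span_sum span_scale span_base) 
  have onC: "inner z b = \<phi> b" if "b \<in> C" for b
  proof -
    have "inner z b = (\<Sum>c\<in>C. (\<phi> c / inner c c) * inner c b)"
      unfolding z_def by (simp add: inner_sum_left)
    also have "\<dots> = (\<phi> b / inner b b) * inner b b"
      apply (rule sum.remove[OF C(1) that, THEN trans])
      apply (subst sum.neutral)
      using C(3) that by (auto simp: pairwise_def orthogonal_def)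
    also have "\<dots> = \<phi> b"
      using linear_0[OF assms(3)] by (cases "b = 0") auto
    finally show ?thesis .
  qed
  have "subspace {v. inner z v = \<phi> v}"
    unfolding subspace_def using linear_add[OF assms(3)] linear_scale[OF assms(3)] linear_0[OF assms(3)]
    by (auto simp: inner_add_right)
  then have "span C \<subseteq> {v. inner z v = \<phi> v}"
    using onC by (intro span_minimal) auto
  then show ?thesis using zV assms(2) C(2) by auto
qed



lemma deriv_line:
  fixes A :: "'a::real_normed_vector \<Rightarrow> 'a \<Rightarrow> real" and P :: "'a \<Rightarrow> real"
  assumes POT: "\<And>v w. ((\<lambda>t. (P (w + t *\<^sub>R v) - P w) / t) \<longlongrightarrow> A w v) (at 0)"
  shows "((\<lambda>t. P (x + t *\<^sub>R d)) has_real_derivative A (x + t0 *\<^sub>R d) d) (at t0)"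
  unfolding DERIV_def
  using POT[where v=d and w="x + t0 *\<^sub>R d"] by (simp add: scaleR_add_left add.assoc)

lemma upper_taylor:
  fixes A :: "'a::real_normed_vector \<Rightarrow> 'a \<Rightarrow> real" and P :: "'a \<Rightarrow> real"
  assumes POT: "\<And>v w. ((\<lambda>t. (P (w + t *\<^sub>R v) - P w) / t) \<longlongrightarrow> A w v) (at 0)"
    and LIP: "\<And>\<theta> v w \<phi>. \<theta> > 0 \<Longrightarrow> max (norm v) (norm (v - w)) \<le> \<theta> \<Longrightarrow>
                 A v \<phi> - A w \<phi> \<le> L \<theta> * norm (v - w) * norm \<phi>"
    and th: "\<theta> > 0"
    and bd: "\<And>t. 0 \<le> t \<Longrightarrow> t \<le> 1 \<Longrightarrow> max (norm (x + t *\<^sub>R d)) (norm (t *\<^sub>R d)) \<le> \<theta>"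
  shows "P (x + d) - P x - A x d \<le> L \<theta> / 2 * (norm d)\<^sup>2"
proof -
  define g where "g t = P (x + t *\<^sub>R d) - t * A x d - L \<theta> / 2 * t\<^sup>2 * (norm d)\<^sup>2" for t
  have "g 1 \<le> g 0"
  proof (rule DERIV_nonpos_imp_nonincreasing[of 0 1 g])
    fix t :: real assume t: "0 \<le> t" "t \<le> 1"
    have D: "(g has_real_derivative (A (x + t *\<^sub>R d) d - A x d - L \<theta> * t * (norm d)\<^sup>2)) (at t)"
      unfolding g_def
      by (auto intro!: derivative_eq_intros deriv_line[OF POT])
    have "A (x + t *\<^sub>R d) d - A x d \<le> L \<theta> * norm (x + t *\<^sub>R d - x) * norm d"
      using LIP[OF th, of "x + t *\<^sub>R d" x d] bd[OF t] by simp
    also have "\<dots> = L \<theta> * t * (norm d)\<^sup>2" using t by (simp add: power2_eq_square)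
    finally show "\<exists>y. (g has_real_derivative y) (at t) \<and> y \<le> 0" using D by auto
  qed simp
  then show ?thesis unfolding g_def by simp
qed

lemma lower_taylor:
  fixes A :: "'a::real_normed_vector \<Rightarrow> 'a \<Rightarrow> real" and P :: "'a \<Rightarrow> real"
  assumes POT: "\<And>v w. ((\<lambda>t. (P (w + t *\<^sub>R v) - P w) / t) \<longlongrightarrow> A w v) (at 0)"
    and SM: "\<And>v w. \<alpha> * (norm (v - w))\<^sup>2 \<le> A v (v - w) - A w (v - w)"
    and A_bl: "\<And>w. bounded_linear (A w)"
    and al: "\<alpha> > 0"
  shows "0 \<le> P (x + d) - P x - A x d"
proof -
  define g where "g t = P (x + t *\<^sub>R d) - t * A x d" for t
  have "g 0 \<le> g 1"
  proof (rule DERIV_nonneg_imp_nondecreasing[of 0 1 g])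
    fix t :: real assume t: "0 \<le> t" "t \<le> 1"
    have D: "(g has_real_derivative (A (x + t *\<^sub>R d) d - A x d)) (at t)"
      unfolding g_def
      by (auto intro!: derivative_eq_intros deriv_line[OF POT])
    have "0 \<le> A (x + t *\<^sub>R d) d - A x d"
    proof (cases "t = 0")
      case False
      have "0 \<le> \<alpha> * (norm (t *\<^sub>R d))\<^sup>2" using al by simp
      also have "\<dots> \<le> A (x + t *\<^sub>R d) (t *\<^sub>R d) - A x (t *\<^sub>R d)"
        using SM[of "x + t *\<^sub>R d" x] by simp
      also have "\<dots> = t * (A (x + t *\<^sub>R d) d - A x d)"
        using linear_scale[OF bounded_linear.linear[OF A_bl]] by (simp add: algebra_simps)
      finally show ?thesis using t False by (simp add: zero_le_mult_iff)
    qed simp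
    then show "\<exists>y. (g has_real_derivative y) (at t) \<and> 0 \<le> y" using D by auto
  qed simp
  then show ?thesis unfolding g_def by simp
qed



lemma zar_bl:
  assumes "bounded_linear (A w)" "bounded_linear F"
  shows "bounded_linear (zar_rhs A F \<delta> w)"
  unfolding zar_rhs_def
  by (intro bounded_linear_add bounded_linear_inner_right bounded_linear_const_mult
        bounded_linear_sub assms)

lemma iter_props:
  fixes \<Psi> :: "('a::real_inner \<Rightarrow> real) \<Rightarrow> 'a \<Rightarrow> 'a"
  assumes Psi: "\<And>\<phi> ws w. bounded_linear \<phi> \<Longrightarrow> ws \<in> V \<Longrightarrow> (\<forall>v\<in>V. inner ws v = \<phi> v) \<Longrightarrow> w \<in> V \<Longrightarrow>
                 \<Psi> \<phi> w \<in> V \<and> norm (ws - \<Psi> \<phi> w) \<le> qalg * norm (ws - w)"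
    and qalg: "0 < qalg"
    and bl: "bounded_linear \<phi>" and z: "z \<in> V" "\<forall>v\<in>V. inner z v = \<phi> v" and w: "w \<in> V"
  shows "(\<Psi> \<phi> ^^ i) w \<in> V \<and> norm (z - (\<Psi> \<phi> ^^ i) w) \<le> qalg ^ i * norm (z - w)"
proof (induction i)
  case 0 then show ?case using w by simp
next
  case (Suc i)
  have "\<Psi> \<phi> ((\<Psi> \<phi> ^^ i) w) \<in> V \<and> norm (z - \<Psi> \<phi> ((\<Psi> \<phi> ^^ i) w)) \<le> qalg * norm (z - (\<Psi> \<phi> ^^ i) w)"
    using Psi[OF bl z] Suc by blast
  moreover have "qalg * norm (z - (\<Psi> \<phi> ^^ i) w) \<le> qalg * (qalg ^ i * norm (z - w))"
    using Suc qalg by (intro mult_left_mono) auto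
  ultimately show ?case by simp
qed

lemma step_props:
  fixes \<Psi> :: "('a::real_inner \<Rightarrow> real) \<Rightarrow> 'a \<Rightarrow> 'a"
  assumes Psi: "\<And>\<phi> ws w. bounded_linear \<phi> \<Longrightarrow> ws \<in> V \<Longrightarrow> (\<forall>v\<in>V. inner ws v = \<phi> v) \<Longrightarrow> w \<in> V \<Longrightarrow>
                 \<Psi> \<phi> w \<in> V \<and> norm (ws - \<Psi> \<phi> w) \<le> qalg * norm (ws - w)"
    and qalg: "0 < qalg" "qalg < 1"
    and eta_nonneg: "\<And>v. 0 \<le> \<eta> v"
    and lam: "lam_lin > 0" "lam_alg > 0"
    and bl: "bounded_linear (zar_rhs A F \<delta> w)" and z: "z \<in> V" "\<forall>v\<in>V. inner z v = zar_rhs A F \<delta> w v"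
    and w: "w \<in> V"
  shows "ail_step \<Psi> A F \<delta> \<eta> lam_lin lam_alg imin w \<in> V
     \<and> norm (z - ail_step \<Psi> A F \<delta> \<eta> lam_lin lam_alg imin w) \<le> qalg ^ imin * norm (z - w)"
proof -
  let ?x = "alg_iter \<Psi> A F \<delta> w"
  have ip: "?x i \<in> V \<and> norm (z - ?x i) \<le> qalg ^ i * norm (z - w)" for i
    unfolding alg_iter_def by (rule iter_props[OF Psi qalg(1) bl z w])
  obtain N where N: "qalg ^ N < lam_alg * (1 - qalg) / 2"
    using real_arch_pow_inv[of "lam_alg * (1 - qalg) / 2" qalg] qalg lam by auto
  define i0 where "i0 = max imin (Suc N)"
  have "alg_stop \<Psi> A F \<delta> \<eta> lam_lin lam_alg imin w i0"
  proof -
    have i0: "1 \<le> i0" "imin \<le> i0" "Suc N \<le> i0" unfolding i0_def by auto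
    then obtain j where j: "i0 = Suc j" "N \<le> j" by (cases i0) auto
    have "norm (?x j - ?x i0) \<le> norm (z - ?x j) + norm (z - ?x i0)"
      by (metis norm_diff_triangle_le norm_minus_commute order_refl)
    also have "\<dots> \<le> qalg ^ j * norm (z - w) + qalg ^ i0 * norm (z - w)"
      using ip[of j] ip[of i0] by linarith
    also have "\<dots> \<le> 2 * qalg ^ N * norm (z - w)"
    proof -
      have "qalg ^ j \<le> qalg ^ N" "qalg ^ i0 \<le> qalg ^ N"
        using j i0 qalg by (intro power_decreasing; simp)+
      then have "qalg ^ j * norm (z - w) \<le> qalg ^ N * norm (z - w)" "qalg ^ i0 * norm (z - w) \<le> qalg ^ N * norm (z - w)"
        by (auto intro!: mult_right_mono)
      then show ?thesis by linarith
    qed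
    also have "\<dots> \<le> lam_alg * (1 - qalg) * norm (z - w)"
      using N by (intro mult_right_mono) auto
    also have "\<dots> \<le> lam_alg * norm (?x i0 - w)"
    proof -
      have "norm (z - w) \<le> norm (?x i0 - w) + norm (z - ?x i0)"
        using norm_triangle_ineq[of "?x i0 - w" "z - ?x i0"] by simp
      moreover have "qalg ^ i0 \<le> qalg" using i0 qalg by (metis One_nat_def power_decreasing power_one_right less_imp_le)
      ultimately have "(1 - qalg) * norm (z - w) \<le> norm (?x i0 - w)"
        using ip[of i0] mult_right_mono[of "qalg ^ i0" qalg "norm (z - w)"]
        by (simp add: algebra_simps)
      then show ?thesis using lam by (simp add: mult.assoc)
    qed
    also have "\<dots> \<le> lam_alg * (lam_lin * \<eta> (?x i0) + norm (?x i0 - w))"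
      using lam eta_nonneg[of "?x i0"] by (intro mult_left_mono) auto
    finally show ?thesis unfolding alg_stop_def using i0 j by simp
  qed
  then have st: "alg_stop \<Psi> A F \<delta> \<eta> lam_lin lam_alg imin w (alg_index \<Psi> A F \<delta> \<eta> lam_lin lam_alg imin w)"
    unfolding alg_index_def by (rule LeastI)
  let ?I = "alg_index \<Psi> A F \<delta> \<eta> lam_lin lam_alg imin w"
  have "imin \<le> ?I" using st unfolding alg_stop_def by simp
  then have "qalg ^ ?I \<le> qalg ^ imin" using qalg by (intro power_decreasing) auto
  then have "qalg ^ ?I * norm (z - w) \<le> qalg ^ imin * norm (z - w)"
    by (intro mult_right_mono) auto
  then show ?thesis using ip[of ?I] unfolding ail_step_def by auto
qed


lemma c_aux:
  fixes \<delta> a b c l :: real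
  assumes "\<delta> > 0"
  shows "(1 / \<delta> - a) * (b * \<delta>\<^sup>2 * c) / l = (\<delta> - a * \<delta>\<^sup>2) * (b * c / l)"
proof -
  have h: "(1 / \<delta> - a) * \<delta>\<^sup>2 = \<delta> - a * \<delta>\<^sup>2"
    using assms by (simp add: power2_eq_square left_diff_distrib)
  have "(1 / \<delta> - a) * (b * \<delta>\<^sup>2 * c) / l = ((1 / \<delta> - a) * \<delta>\<^sup>2) * (b * c / l)"
    by (simp add: ac_simps)
  then show ?thesis unfolding h .
qed



theorem lemma8:
  fixes A :: "'a::{real_inner, complete_space} \<Rightarrow> 'a \<Rightarrow> real"
    and F P :: "'a \<Rightarrow> real"
    and \<alpha> qalg lam_lin lam_alg \<delta> M \<tau> :: real
    and L :: "real \<Rightarrow> real"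
    and V :: "'a set"
    and \<Psi> :: "('a \<Rightarrow> real) \<Rightarrow> 'a \<Rightarrow> 'a"
    and \<eta> :: "'a \<Rightarrow> real"
    and imin k :: nat
    and u0 ustar :: 'a
  assumes A_bl: "\<And>w. bounded_linear (A w)"
    and F_bl: "bounded_linear F"
    and A0: "A 0 \<noteq> F"
    and SM_pos: "\<alpha> > 0"
    and SM: "\<And>v w. \<alpha> * (norm (v - w))\<^sup>2 \<le> A v (v - w) - A w (v - w)"
    and LIP_pos: "\<And>\<theta>. \<theta> > 0 \<Longrightarrow> L \<theta> > 0"
    and LIP: "\<And>\<theta> v w \<phi>. \<theta> > 0 \<Longrightarrow> max (norm v) (norm (v - w)) \<le> \<theta> \<Longrightarrow>
                 A v \<phi> - A w \<phi> \<le> L \<theta> * norm (v - w) * norm \<phi>"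
    and POT: "\<And>v w. ((\<lambda>t. (P (w + t *\<^sub>R v) - P w) / t) \<longlongrightarrow> A w v) (at 0)"
    and V_sub: "subspace V"
    and V_fin: "\<exists>B. finite B \<and> V = span B"
    and ustar: "ustar \<in> V" "\<And>v. v \<in> V \<Longrightarrow> A ustar v = F v"
    and qalg: "0 < qalg" "qalg < 1"
    and Psi: "\<And>\<phi> ws w. bounded_linear \<phi> \<Longrightarrow> ws \<in> V \<Longrightarrow> (\<forall>v\<in>V. inner ws v = \<phi> v) \<Longrightarrow> w \<in> V \<Longrightarrow>
                 \<Psi> \<phi> w \<in> V \<and> norm (ws - \<Psi> \<phi> w) \<le> qalg * norm (ws - w)"
    and eta_nonneg: "\<And>v. 0 \<le> \<eta> v"
    and lam: "lam_lin > 0" "lam_alg > 0"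
    and imin: "1 \<le> imin" "qalg ^ imin \<le> 1 / 3"
    and M_def: "M = onorm (\<lambda>v. F v - A 0 v) / \<alpha>"
    and tau_def: "\<tau> = M + 3 * M * sqrt (L (3 * M) / \<alpha>)"
    and u0: "u0 \<in> V" "norm u0 \<le> 2 * M"
    and k_lt: "enat k < lin_index \<Psi> A F P \<delta> \<eta> lam_lin lam_alg imin M u0"
    and k_bd: "norm (ail_iterate \<Psi> A F \<delta> \<eta> lam_lin lam_alg imin u0 k) \<le> \<tau>"
    and delta: "0 < \<delta>" "\<delta> < min (1 / L (5 * \<tau>)) (2 * \<alpha> / (L (2 * \<tau>))\<^sup>2)"
  shows "4 * M \<le> \<tau>
    \<and> 0 \<le> energy P F (ail_iterate \<Psi> A F \<delta> \<eta> lam_lin lam_alg imin u0 (Suc k)) - energy P F ustar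
    \<and> energy P F (ail_iterate \<Psi> A F \<delta> \<eta> lam_lin lam_alg imin u0 (Suc k)) - energy P F ustar
        \<le> qE2 L \<alpha> qalg imin \<tau> \<delta> *
           (energy P F (ail_iterate \<Psi> A F \<delta> \<eta> lam_lin lam_alg imin u0 k) - energy P F ustar)
    \<and> 0 \<le> qE2 L \<alpha> qalg imin \<tau> \<delta> \<and> qE2 L \<alpha> qalg imin \<tau> \<delta> < 1
    \<and> ((\<lambda>d. sqrt (qE2 L \<alpha> qalg imin \<tau> d)) \<longlongrightarrow> 1) (at_right 0)
    \<and> (1 - qE2 L \<alpha> qalg imin \<tau> \<delta>) *
        (energy P F (ail_iterate \<Psi> A F \<delta> \<eta> lam_lin lam_alg imin u0 k) - energy P F ustar)
      \<le> energy P F (ail_iterate \<Psi> A F \<delta> \<eta> lam_lin lam_alg imin u0 k)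
         - energy P F (ail_iterate \<Psi> A F \<delta> \<eta> lam_lin lam_alg imin u0 (Suc k))
    \<and> energy P F (ail_iterate \<Psi> A F \<delta> \<eta> lam_lin lam_alg imin u0 k)
         - energy P F (ail_iterate \<Psi> A F \<delta> \<eta> lam_lin lam_alg imin u0 (Suc k))
      \<le> energy P F (ail_iterate \<Psi> A F \<delta> \<eta> lam_lin lam_alg imin u0 k) - energy P F ustar"
  proof -
  let ?E = "energy P F"
  let ?it = "ail_iterate \<Psi> A F \<delta> \<eta> lam_lin lam_alg imin u0"
  let ?st = "ail_step \<Psi> A F \<delta> \<eta> lam_lin lam_alg imin"
  obtain B where B: "finite B" "V = span B" using V_fin by blast
  have Flin: "linear F" using F_bl bounded_linear.linear by blast
  have Alin: "linear (A w)" for w using A_bl bounded_linear.linear by blast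
  obtain x0 where x0: "A 0 x0 \<noteq> F x0" using A0 by blast
  then have x0nz: "x0 \<noteq> 0" using linear_0[OF Flin] linear_0[OF Alin[of 0]] by auto
  have alL: "\<alpha> \<le> L \<theta>" if th: "\<theta> > 0" for \<theta>
  proof -
    define y where "y = (\<theta> / norm x0) *\<^sub>R x0"
    have ny: "norm y = \<theta>" unfolding y_def using x0nz th by simp
    have "\<alpha> * (norm y)\<^sup>2 \<le> A y y - A 0 y" using SM[of y 0] by simp
    also have "\<dots> \<le> L \<theta> * norm y * norm y" using LIP[OF th, of y 0 y] ny by simp
    finally have "\<alpha> * \<theta>\<^sup>2 \<le> L \<theta> * \<theta>\<^sup>2" using ny by (simp add: power2_eq_square)
    then show ?thesis using th by simp
  qed
  have blFA: "bounded_linear (\<lambda>v. F v - A 0 v)" using F_bl A_bl by (intro bounded_linear_sub)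
  have onpos: "0 < onorm (\<lambda>v. F v - A 0 v)" using onorm_pos_lt[OF blFA] x0 by auto
  have Mpos: "M > 0" using M_def onpos SM_pos by simp
  have ustarM: "norm ustar \<le> M"
  proof (cases "norm ustar = 0")
    case False
    have "\<alpha> * (norm ustar)\<^sup>2 \<le> A ustar ustar - A 0 ustar" using SM[of ustar 0] by simp
    also have "\<dots> = F ustar - A 0 ustar" using ustar by simp
    also have "\<dots> \<le> onorm (\<lambda>v. F v - A 0 v) * norm ustar"
      using onorm[OF blFA, of ustar] by simp
    finally have "\<alpha> * norm ustar \<le> onorm (\<lambda>v. F v - A 0 v)" using False
      by (simp add: power2_eq_square)
    then show ?thesis using M_def SM_pos by (simp add: pos_le_divide_eq mult.commute)
  qed (use Mpos in simp)
  have tau4: "4 * M \<le> \<tau>"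
  proof -
    have "1 \<le> L (3 * M) / \<alpha>" using alL[of "3 * M"] Mpos SM_pos by simp
    then have "1 \<le> sqrt (L (3 * M) / \<alpha>)" by simp
    then have "3 * M \<le> 3 * M * sqrt (L (3 * M) / \<alpha>)" using Mpos by simp
    then show ?thesis using tau_def by simp
  qed
  have taupos: "\<tau> > 0" using tau4 Mpos by simp
  have rep: "\<exists>z\<in>V. \<forall>v\<in>V. inner z v = zar_rhs A F \<delta> w v" for w
    by (rule riesz_fin[OF B(1) B(2) bounded_linear.linear[OF zar_bl[OF A_bl F_bl]]])
  have stepV: "?st w \<in> V" if "w \<in> V" for w
  proof -
    obtain z where zz: "z \<in> V" "\<forall>v\<in>V. inner z v = zar_rhs A F \<delta> w v" using rep[of w] by blast
    show ?thesis using step_props[OF Psi qalg eta_nonneg lam zar_bl[OF A_bl F_bl] zz that] by (rule conjunct1)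
  qed
  have itV: "?it j \<in> V" for j
    by (induction j) (simp_all add: ail_iterate_def u0 stepV)
  define w where "w = ?it k"
  define y where "y = ?it (Suc k)"
  have y_eq: "y = ?st w" unfolding y_def w_def ail_iterate_def by simp
  have wV: "w \<in> V" unfolding w_def by (rule itV)
  have yV: "y \<in> V" unfolding y_def by (rule itV)
  have wt: "norm w \<le> \<tau>" using k_bd w_def by simp
  obtain z where zV: "z \<in> V" and z: "\<forall>v\<in>V. inner z v = zar_rhs A F \<delta> w v" using rep[of w] by blast
  define qi where "qi = qalg ^ imin"
  have qi: "0 \<le> qi" "qi \<le> 1/3" using qalg imin qi_def by auto
  have zy: "norm (z - y) \<le> qi * norm (z - w)"
    using step_props[OF Psi qalg eta_nonneg lam zar_bl[OF A_bl F_bl] zV z wV] y_eq qi_def by simp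
  define e where "e = z - w"
  define d where "d = y - w"
  have dV: "d \<in> V" unfolding d_def using yV wV V_sub by (simp add: subspace_diff)
  have eq_e: "inner e v = \<delta> * (A ustar v - A w v)" if "v \<in> V" for v
    using z that ustar unfolding e_def zar_rhs_def by (simp add: inner_diff_left)
  have Lt2: "L (2 * \<tau>) > 0" "L (5 * \<tau>) > 0" using LIP_pos taupos by auto
  have uw: "norm (ustar - w) \<le> \<tau> + M"
    using norm_triangle_ineq4[of ustar w] ustarM wt by simp
  have eLip: "norm e \<le> \<delta> * L (2 * \<tau>) * norm (ustar - w)"
  proof (cases "norm e = 0")
    case False
    have "(norm e)\<^sup>2 = inner e e" by (simp add: power2_norm_eq_inner)
    also have "\<dots> = \<delta> * (A ustar e - A w e)" using eq_e[of e] zV wV V_sub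
      unfolding e_def by (simp add: subspace_diff)
    also have "\<dots> \<le> \<delta> * (L (2 * \<tau>) * norm (ustar - w) * norm e)"
      using LIP[of "2 * \<tau>" ustar w e] taupos ustarM uw tau4 delta(1)
      by (intro mult_left_mono) auto
    finally show ?thesis using False by (simp add: power2_eq_square)
  qed (use delta(1) Lt2 in simp)
  have dL2: "\<delta> * L (2 * \<tau>) \<le> 2"
  proof -
    have "\<delta> < 2 * \<alpha> / (L (2 * \<tau>))\<^sup>2" using delta(2) by simp
    then have "\<delta> * L (2 * \<tau>) < 2 * \<alpha> / (L (2 * \<tau>))\<^sup>2 * L (2 * \<tau>)"
      by (rule mult_strict_right_mono[OF _ Lt2(1)])
    also have "\<dots> = 2 * \<alpha> / L (2 * \<tau>)" using Lt2 by (simp add: power2_eq_square)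
    also have "\<dots> \<le> 2" using alL[of "2 * \<tau>"] taupos by (simp add: pos_divide_le_eq[OF Lt2(1)])
    finally show ?thesis by simp
  qed
  have ne: "norm e \<le> 5 / 2 * \<tau>"
  proof -
    have "norm e \<le> \<delta> * L (2 * \<tau>) * norm (ustar - w)" by (rule eLip)
    also have "\<dots> \<le> 2 * (\<tau> + M)" using dL2 uw delta(1) Lt2
      by (intro mult_mono) auto
    finally show ?thesis using tau4 by simp
  qed
  have nd: "norm d \<le> (1 + qi) * norm e"
    using norm_triangle_ineq[of e "y - z"] zy unfolding d_def e_def
    by (simp add: norm_minus_commute algebra_simps)
  have nd2: "norm d \<le> 10 / 3 * \<tau>"
  proof -
    have "(1 + qi) * norm e \<le> 4/3 * (5/2 * \<tau>)" using qi ne by (intro mult_mono) auto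
    then show ?thesis using nd by simp
  qed
  have T1: "P (w + d) - P w - A w d \<le> L (5 * \<tau>) / 2 * (norm d)\<^sup>2"
  proof (rule upper_taylor[OF POT LIP])
    show "5 * \<tau> > 0" using taupos by simp
    fix t :: real assume t: "0 \<le> t" "t \<le> 1"
    have "norm (t *\<^sub>R d) \<le> norm d" using t by (simp add: mult_left_le_one_le)
    moreover have "norm (w + t *\<^sub>R d) \<le> norm w + norm (t *\<^sub>R d)" by (rule norm_triangle_ineq)
    ultimately show "max (norm (w + t *\<^sub>R d)) (norm (t *\<^sub>R d)) \<le> 5 * \<tau>"
      using nd2 wt taupos by auto
  qed
  have ied: "inner e d = \<delta> * (F d - A w d)" using eq_e[OF dV] ustar(2)[OF dV] by simp
  have Ediff1: "?E w - ?E y \<ge> inner e d / \<delta> - L (5 * \<tau>) / 2 * (norm d)\<^sup>2"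
  proof -
    have "F y = F w + F d" unfolding d_def using linear_diff[OF Flin] by simp
    moreover have "w + d = y" unfolding d_def by simp
    moreover have "inner e d / \<delta> = F d - A w d" using ied delta(1) by simp
    ultimately show ?thesis using T1 unfolding energy_def by simp
  qed
  have ed: "inner e d \<ge> (norm d)\<^sup>2 / 2"
  proof -
    have "(norm (e - d))\<^sup>2 = (norm e)\<^sup>2 - 2 * inner e d + (norm d)\<^sup>2"
      by (simp add: power2_norm_eq_inner inner_diff_left inner_diff_right inner_commute)
    moreover have "norm (e - d) \<le> norm e"
    proof -
      have eq: "e - d = z - y" unfolding e_def d_def by simp
      have "qi * norm (z - w) \<le> 1 * norm (z - w)"
        using qi by (intro mult_right_mono) auto
      then show ?thesis unfolding eq using zy unfolding e_def by linarith
    qed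
    ultimately have "(norm e)\<^sup>2 - 2 * inner e d + (norm d)\<^sup>2 \<le> (norm e)\<^sup>2"
      using power_mono[of "norm (e - d)" "norm e" 2] by simp
    then show ?thesis by simp
  qed
  have dpos: "1 / \<delta> - L (5 * \<tau>) > 0"
    using delta Lt2 by (simp add: field_simps)
  have Ediff2: "?E w - ?E y \<ge> (1 / \<delta> - L (5 * \<tau>)) / 2 * (norm d)\<^sup>2"
  proof -
    have 1: "(norm d)\<^sup>2 / 2 / \<delta> \<le> inner e d / \<delta>"
      by (rule divide_right_mono[OF ed]) (use delta(1) in simp)
    have 2: "(1 / \<delta> - L (5 * \<tau>)) / 2 * (norm d)\<^sup>2 = (norm d)\<^sup>2 / 2 / \<delta> - L (5 * \<tau>) / 2 * (norm d)\<^sup>2"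
      by (simp add: field_simps)
    show ?thesis unfolding 2 using 1 Ediff1 by linarith
  qed
  have de: "(1 - qi) * norm e \<le> norm d"
    using norm_triangle_ineq[of d "z - y"] zy unfolding d_def e_def
    by (simp add: norm_minus_commute algebra_simps)
  have de2: "(1 - qi)\<^sup>2 * (norm e)\<^sup>2 \<le> (norm d)\<^sup>2"
    using power_mono[OF de, of 2] qi by (simp add: power_mult_distrib)
  have ew: "\<delta> * \<alpha> * norm (ustar - w) \<le> norm e"
  proof (cases "norm (ustar - w) = 0")
    case False
    have "\<delta> * (\<alpha> * (norm (ustar - w))\<^sup>2) \<le> \<delta> * (A ustar (ustar - w) - A w (ustar - w))"
      using SM[of ustar w] delta(1) by (intro mult_left_mono) auto
    also have "\<dots> = inner e (ustar - w)" using eq_e[of "ustar - w"] ustar wV V_sub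
      by (simp add: subspace_diff)
    also have "\<dots> \<le> norm e * norm (ustar - w)" by (rule norm_cauchy_schwarz)
    finally show ?thesis using False by (simp add: power2_eq_square)
  qed simp
  have ew2: "\<delta>\<^sup>2 * \<alpha>\<^sup>2 * (norm (ustar - w))\<^sup>2 \<le> (norm e)\<^sup>2"
    using power_mono[OF ew, of 2] delta SM_pos by (simp add: power_mult_distrib)
  have T2: "?E w - ?E ustar \<le> L (2 * \<tau>) / 2 * (norm (w - ustar))\<^sup>2"
  proof -
    have "P (ustar + (w - ustar)) - P ustar - A ustar (w - ustar) \<le> L (2 * \<tau>) / 2 * (norm (w - ustar))\<^sup>2"
    proof (rule upper_taylor[OF POT LIP])
      show "2 * \<tau> > 0" using taupos by simp
      fix t :: real assume t: "0 \<le> t" "t \<le> 1"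
      have "ustar + t *\<^sub>R (w - ustar) = (1 - t) *\<^sub>R ustar + t *\<^sub>R w" by (simp add: algebra_simps)
      then have "norm (ustar + t *\<^sub>R (w - ustar)) \<le> (1 - t) * norm ustar + t * norm w"
        using norm_triangle_ineq[of "(1 - t) *\<^sub>R ustar" "t *\<^sub>R w"] t by simp
      also have "\<dots> \<le> (1 - t) * \<tau> + t * \<tau>" using t ustarM tau4 Mpos wt
        by (intro add_mono mult_left_mono) auto
      finally have 1: "norm (ustar + t *\<^sub>R (w - ustar)) \<le> 2 * \<tau>" using taupos by (simp add: algebra_simps)
      have "norm (t *\<^sub>R (w - ustar)) \<le> norm (w - ustar)" using t by (simp add: mult_left_le_one_le)
      then have "norm (t *\<^sub>R (w - ustar)) \<le> 2 * \<tau>" using uw tau4 Mpos by (simp add: norm_minus_commute)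
      with 1 show "max (norm (ustar + t *\<^sub>R (w - ustar))) (norm (t *\<^sub>R (w - ustar))) \<le> 2 * \<tau>" by simp
    qed
    moreover have "A ustar (w - ustar) = F w - F ustar"
      using ustar wV V_sub linear_diff[OF Flin] by (simp add: subspace_diff)
    ultimately show ?thesis unfolding energy_def by simp
  qed
  have T3: "0 \<le> ?E y - ?E ustar"
  proof -
    have "0 \<le> P (ustar + (y - ustar)) - P ustar - A ustar (y - ustar)"
      by (rule lower_taylor[OF POT SM A_bl SM_pos])
    moreover have "A ustar (y - ustar) = F y - F ustar"
      using ustar yV V_sub linear_diff[OF Flin] by (simp add: subspace_diff)
    ultimately show ?thesis unfolding energy_def by simp
  qed
  define c where "c = (1 / \<delta> - L (5 * \<tau>)) * ((1 - qi)\<^sup>2 * \<delta>\<^sup>2 * \<alpha>\<^sup>2) / L (2 * \<tau>)"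
  have qE: "qE2 L \<alpha> qalg imin \<tau> \<delta> = 1 - c" unfolding qE2_def c_def qi_def by simp
  have cpos: "c > 0" unfolding c_def using dpos qi delta SM_pos Lt2 by simp
  have main: "c * (?E w - ?E ustar) \<le> ?E w - ?E y"
  proof -
    have "c * (?E w - ?E ustar) \<le> c * (L (2 * \<tau>) / 2 * (norm (w - ustar))\<^sup>2)"
      using T2 cpos by (intro mult_left_mono) auto
    also have "\<dots> = (1 / \<delta> - L (5 * \<tau>)) / 2 * ((1 - qi)\<^sup>2 * (\<delta>\<^sup>2 * \<alpha>\<^sup>2 * (norm (ustar - w))\<^sup>2))"
      unfolding c_def using Lt2 by (simp add: field_simps norm_minus_commute)
    also have "\<dots> \<le> (1 / \<delta> - L (5 * \<tau>)) / 2 * ((1 - qi)\<^sup>2 * (norm e)\<^sup>2)"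
      using ew2 dpos by (intro mult_left_mono) auto
    also have "\<dots> \<le> (1 / \<delta> - L (5 * \<tau>)) / 2 * (norm d)\<^sup>2"
      using de2 dpos by (intro mult_left_mono) auto
    also have "\<dots> \<le> ?E w - ?E y" by (rule Ediff2)
    finally show ?thesis .
  qed
  have c_le1: "c \<le> 1"
  proof -
    have a: "\<delta> - L (5 * \<tau>) * \<delta>\<^sup>2 \<le> 1 / (4 * L (5 * \<tau>))"
    proof -
      have "0 \<le> (1 - 2 * L (5 * \<tau>) * \<delta>)\<^sup>2" by simp
      then have "4 * L (5 * \<tau>) * (\<delta> - L (5 * \<tau>) * \<delta>\<^sup>2) \<le> 1"
        by (simp add: power2_eq_square algebra_simps)
      then show ?thesis using Lt2 by (simp add: field_simps)
    qed
    have c_eq: "c = (\<delta> - L (5 * \<tau>) * \<delta>\<^sup>2) * ((1 - qi)\<^sup>2 * \<alpha>\<^sup>2 / L (2 * \<tau>))"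
      unfolding c_def by (rule c_aux[OF delta(1)])
    have b: "(1 - qi)\<^sup>2 * \<alpha>\<^sup>2 / L (2 * \<tau>) \<le> \<alpha>\<^sup>2 / L (2 * \<tau>)"
    proof -
      have "(1 - qi)\<^sup>2 \<le> 1" using qi by (simp add: power_le_one)
      then show ?thesis using Lt2 by (intro divide_right_mono) (auto intro: mult_left_le_one_le)
    qed
    have "c \<le> 1 / (4 * L (5 * \<tau>)) * (\<alpha>\<^sup>2 / L (2 * \<tau>))"
      unfolding c_eq using a b Lt2 qi by (intro mult_mono) auto
    also have "\<dots> \<le> 1"
    proof -
      have "\<alpha>\<^sup>2 \<le> L (5 * \<tau>) * L (2 * \<tau>)"
        using alL[of "5 * \<tau>"] alL[of "2 * \<tau>"] taupos SM_pos
        by (simp add: power2_eq_square mult_mono)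
      moreover have "0 < L (5 * \<tau>) * L (2 * \<tau>)" using Lt2 by simp
      ultimately have "\<alpha>\<^sup>2 \<le> 4 * (L (5 * \<tau>) * L (2 * \<tau>))" by linarith
      then show ?thesis using Lt2 by (simp add: field_simps)
    qed
    finally show ?thesis .
  qed
  have lim: "((\<lambda>d. sqrt (qE2 L \<alpha> qalg imin \<tau> d)) \<longlongrightarrow> 1) (at_right 0)"
  proof -
    define K where "K = (1 - qalg ^ imin)\<^sup>2 * \<alpha>\<^sup>2 / L (2 * \<tau>)"
    have ev: "\<forall>\<^sub>F d in at_right 0. sqrt (1 - (d - L (5 * \<tau>) * d\<^sup>2) * K) = sqrt (qE2 L \<alpha> qalg imin \<tau> d)"
      unfolding eventually_at_right_field
      by (rule exI[of _ 1]) (auto simp: qE2_def K_def c_aux)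
    have "((\<lambda>d. sqrt (1 - (d - L (5 * \<tau>) * d\<^sup>2) * K)) \<longlongrightarrow> sqrt (1 - (0 - L (5 * \<tau>) * 0\<^sup>2) * K)) (at_right 0)"
      by (intro tendsto_intros)
    then show ?thesis using Lim_transform_eventually[OF _ ev] by simp
  qed
  have fin: "(1 - c) * (?E w - ?E ustar) = (?E w - ?E ustar) - c * (?E w - ?E ustar)"
    by (simp add: algebra_simps)
  have "4 * M \<le> \<tau>
    \<and> 0 \<le> ?E y - ?E ustar
    \<and> ?E y - ?E ustar \<le> (1 - c) * (?E w - ?E ustar)
    \<and> 0 \<le> 1 - c \<and> 1 - c < 1
    \<and> ((\<lambda>d. sqrt (qE2 L \<alpha> qalg imin \<tau> d)) \<longlongrightarrow> 1) (at_right 0)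
    \<and> (1 - (1 - c)) * (?E w - ?E ustar) \<le> ?E w - ?E y
    \<and> ?E w - ?E y \<le> ?E w - ?E ustar"
    using tau4 T3 main cpos c_le1 lim fin by simp
  then show ?thesis unfolding qE w_def y_def .
qed

end
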